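(* Let $\Omega$ be a slice domain in $\mathbb{H}$ and let $F:\Omega\to M_n(\mathbb{H})$ be a regular matrix-valued function. Suppose there exist $I\in\mathbb{S}$ and $q_0\in\Omega_I$ such that $\Vert F(q)\Vert\le\Vert F(q_0)\Vert$ for all $q\in\Omega$, and let $x_0\in\mathbb{H}^n$ be a maximizing vector for $F(q_0)$. Then $F^{(k)}(q_0)x_0=0$ for all $k\ge1$, where $F^{(k)}$ denotes the $k$-th (slice) derivative of $F$.
   Context: $\mathbb{H}$ denotes the real quaternions; $\mathbb{S}=\{q\in\mathbb{H}:q^2=-1\}$; for $I\in\mathbb{S}$, $L_I=\mathbb{R}+\mathbb{R}I$ and $\Omega_I=\Omega\cap L_I$. A domain $\Omega\subseteq\mathbb{H}$ (open connected set) is a slice domain if it meets the real axis and $\Omega_I$ is a domain in $L_I$ for every $I\in\mathbb{S}$. A function $f:\Omega\to\mathbb{H}$ is (left) regular if for every $I\in\mathbb{S}$, $\frac12(\partial_x+I\partial_y)f(x+yI)=0$ on $\Omega_I$; its slice derivative is $f'(x+yI)=\partial_x f(x+yI)$, and $f^{(k)}$ is the $k$-th iterate. A matrix-valued function is regular if each entry is regular, and derivatives are taken entrywise. $\mathbb{H}^n$ is the space of quaternionic column vectors with $\Vert x\Vert_2=(x^*x)^{1/2}$; $\Vert A\Vert=\sup_{x\ne0}\Vert Ax\Vert_2/\Vert x\Vert_2$ is the operator norm. A unit vector $x_0\in\mathbb{H}^n$ is a maximizing vector for $A\in M_n(\mathbb{H})$ if $\Vert Ax_0\Vert_2=\Vert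 A\Vert$. *)

theory Defs
  imports "HOL-Analysis.Analysis"
begin

text \<open>A quaternion a + b i + c j + d k is the vector with components
  a, b, c, d (indices 1, 2, 3, 4 of the numeral type 4).  The norm on
  real^4 is the Euclidean norm, i.e. the usual quaternionic modulus.\<close>

type_synonym quat = "real ^ 4"

definition Quat :: "real \<Rightarrow> real \<Rightarrow> real \<Rightarrow> real \<Rightarrow> quat" where
  "Quat a b c d = (\<chi> i. if i = 1 then a else if i = 2 then b else if i = 3 then c else d)"

definition qre :: "quat \<Rightarrow> real" where "qre q = q $ 1"
definition qi :: "quat \<Rightarrow> real" where "qi q = q $ 2"
definition qj :: "quat \<Rightarrow> real" where "qj q = q $ 3"
definition qk :: "quat \<Rightarrow> real" where "qk q = q $ 4"

definition qmul :: "quat \<Rightarrow> quat \<Rightarrow> quat" (infixl "\<star>" 70) where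
  "p \<star> q = Quat
     (qre p * qre q - qi p * qi q - qj p * qj q - qk p * qk q)
     (qre p * qi q + qi p * qre q + qj p * qk q - qk p * qj q)
     (qre p * qj q - qi p * qk q + qj p * qre q + qk p * qi q)
     (qre p * qk q + qi p * qj q - qj p * qi q + qk p * qre q)"

definition qreal :: "real \<Rightarrow> quat" where "qreal r = Quat r 0 0 0"

definition qS :: "quat set" where "qS = {q. q \<star> q = - qreal 1}"

definition slice :: "quat \<Rightarrow> quat set" where
  "slice I = {qreal x + y *\<^sub>R I | x y. True}"

definition slice_domain :: "quat set \<Rightarrow> bool" where
  "slice_domain \<Omega> \<longleftrightarrow> open \<Omega> \<and> connected \<Omega> \<and> \<Omega> \<inter> range qreal \<noteq> {}
     \<and> (\<forall>I\<in>qS. connected (\<Omega> \<inter> slice I))"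

definition regular :: "quat set \<Rightarrow> (quat \<Rightarrow> quat) \<Rightarrow> bool" where
  "regular \<Omega> f \<longleftrightarrow> (\<forall>I\<in>qS. \<forall>x y. qreal x + y *\<^sub>R I \<in> \<Omega> \<longrightarrow>
      ((\<lambda>(a::real, b::real). f (qreal a + b *\<^sub>R I)) differentiable (at (x, y)))
      \<and> (1/2) *\<^sub>R (vector_derivative (\<lambda>a. f (qreal a + y *\<^sub>R I)) (at x)
            + I \<star> vector_derivative (\<lambda>b. f (qreal x + b *\<^sub>R I)) (at y)) = 0)"

definition sderiv :: "(quat \<Rightarrow> quat) \<Rightarrow> quat \<Rightarrow> quat" where
  "sderiv f q = vector_derivative (\<lambda>t. f (q + qreal t)) (at 0)"

text \<open>Quaternionic matrices (n x n, n = CARD('n)) and vectors in H^n.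
  The norm on quat^'n is the Euclidean norm ||x||_2 = (x^* x)^(1/2).\<close>
definition qmatvec :: "quat ^'n ^'n \<Rightarrow> quat ^'n \<Rightarrow> quat ^'n" where
  "qmatvec A x = (\<chi> i. \<Sum>j\<in>UNIV. (A $ i $ j) \<star> (x $ j))"

definition qopnorm :: "quat ^'n ^'n \<Rightarrow> real" where
  "qopnorm A = onorm (qmatvec A)"

definition matrix_regular :: "quat set \<Rightarrow> (quat \<Rightarrow> quat ^'n ^'n) \<Rightarrow> bool" where
  "matrix_regular \<Omega> F \<longleftrightarrow> (\<forall>i j. regular \<Omega> (\<lambda>q. F q $ i $ j))"

definition msderiv :: "nat \<Rightarrow> (quat \<Rightarrow> quat ^'n ^'n) \<Rightarrow> quat \<Rightarrow> quat ^'n ^'n" where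
  "msderiv k F q = (\<chi> i j. (sderiv ^^ k) (\<lambda>p. F p $ i $ j) q)"

definition maximizing_vector :: "quat ^'n ^'n \<Rightarrow> quat ^'n \<Rightarrow> bool" where
  "maximizing_vector A x \<longleftrightarrow> norm x = 1 \<and> norm (qmatvec A x) = qopnorm A"

end

theory Submission
  imports Defs "HOL-Complex_Analysis.Complex_Analysis"
begin
lemma Quat_nth[simp]: "Quat a b c d $ 1 = a" "Quat a b c d $ 2 = b" "Quat a b c d $ 3 = c" "Quat a b c d $ 4 = d"
  by (simp_all add: Quat_def)

lemma quat_eqI: "p $ 1 = q $ 1 \<Longrightarrow> p $ 2 = q $ 2 \<Longrightarrow> p $ 3 = q $ 3 \<Longrightarrow> p $ 4 = q $ 4 \<Longrightarrow> p = (q::quat)"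
  unfolding vec_eq_iff using exhaust_4 by metis

lemma qmul_assoc: "(p \<star> q) \<star> r = p \<star> (q \<star> r)"
  by (rule quat_eqI) (simp_all add: qmul_def qre_def qi_def qj_def qk_def algebra_simps)

lemma qmul_add_right: "p \<star> (q + r) = p \<star> q + p \<star> r"
  by (rule quat_eqI) (simp_all add: qmul_def qre_def qi_def qj_def qk_def algebra_simps)
lemma qmul_add_left: "(q + r) \<star> p = q \<star> p + r \<star> p"
  by (rule quat_eqI) (simp_all add: qmul_def qre_def qi_def qj_def qk_def algebra_simps)
lemma qmul_scaleR_right: "p \<star> (a *\<^sub>R q) = a *\<^sub>R (p \<star> q)"
  by (rule quat_eqI) (simp_all add: qmul_def qre_def qi_def qj_def qk_def algebra_simps)
lemma qmul_scaleR_left: "(a *\<^sub>R q) \<star> p = a *\<^sub>R (q \<star> p)"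
  by (rule quat_eqI) (simp_all add: qmul_def qre_def qi_def qj_def qk_def algebra_simps)
lemma qmul_zero_right[simp]: "p \<star> 0 = 0"
  by (rule quat_eqI) (simp_all add: qmul_def qre_def qi_def qj_def qk_def)
lemma qmul_zero_left[simp]: "0 \<star> p = 0"
  by (rule quat_eqI) (simp_all add: qmul_def qre_def qi_def qj_def qk_def)
lemma qmul_one_left[simp]: "qreal 1 \<star> p = p"
  by (rule quat_eqI) (simp_all add: qmul_def qre_def qi_def qj_def qk_def qreal_def)
lemma qmul_uminus_left: "(- q) \<star> p = - (q \<star> p)"
  by (rule quat_eqI) (simp_all add: qmul_def qre_def qi_def qj_def qk_def algebra_simps)
lemma qmul_uminus_right: "p \<star> (- q) = - (p \<star> q)"
  by (rule quat_eqI) (simp_all add: qmul_def qre_def qi_def qj_def qk_def algebra_simps)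
lemma qreal_add: "qreal (a + b) = qreal a + qreal b"
  by (rule quat_eqI) (simp_all add: qreal_def)

lemma II: "I \<in> qS \<Longrightarrow> I \<star> (I \<star> p) = - p"
  by (simp add: qS_def flip: qmul_assoc add: qmul_uminus_left)

lemma linear_qmul_right: "linear (\<lambda>q. p \<star> q)"
  by (rule linearI) (simp_all add: qmul_add_right qmul_scaleR_right)
lemma linear_qmul_left: "linear (\<lambda>q. q \<star> p)"
  by (rule linearI) (simp_all add: qmul_add_left qmul_scaleR_left)
lemma bl_qmul_right: "bounded_linear (\<lambda>q. p \<star> q)"
  using linear_conv_bounded_linear linear_qmul_right by blast
lemma bl_qmul_left: "bounded_linear (\<lambda>q. q \<star> p)"
  using linear_conv_bounded_linear linear_qmul_left by blast

lemma hvd_vec: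
  fixes f :: "real \<Rightarrow> real^'m"
  assumes "\<And>i. ((\<lambda>t. f t $ i) has_vector_derivative (v $ i)) (at x)"
  shows "(f has_vector_derivative v) (at x)"
  unfolding has_vector_derivative_def
  apply (subst has_derivative_componentwise_within)
  using assms unfolding has_vector_derivative_def
  by (auto simp: Basis_vec_def inner_axis)


definition iota :: "quat \<Rightarrow> complex \<Rightarrow> quat" where "iota I z = qreal (Re z) + Im z *\<^sub>R I"
definition SH :: "quat \<Rightarrow> complex set \<Rightarrow> (complex \<Rightarrow> quat) \<Rightarrow> bool" where
  "SH I U \<psi> \<longleftrightarrow> (\<forall>z\<in>U. \<exists>A. (\<psi> has_derivative (\<lambda>w. Re w *\<^sub>R A + Im w *\<^sub>R (I \<star> A))) (at z))"
definition Lam :: "quat \<Rightarrow> 4 \<Rightarrow> quat \<Rightarrow> complex" where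
  "Lam I c q = Complex (q $ c) (- ((I \<star> q) $ c))"

lemma bl_Lam: "bounded_linear (Lam I c)"
proof -
  have "linear (Lam I c)"
    by (rule linearI) (simp_all add: Lam_def qmul_add_right qmul_scaleR_right complex_eq_iff)
  then show ?thesis using linear_conv_bounded_linear by blast
qed

lemma Re_Lam[simp]: "Re (Lam I c q) = q $ c" by (simp add: Lam_def)

lemma SH_holo:
  assumes I: "I \<in> qS" and U: "open U" and sh: "SH I U \<psi>"
  shows "(\<lambda>z. Lam I c (\<psi> z)) holomorphic_on U"
  unfolding holomorphic_on_open[OF U]
proof
  fix z assume "z \<in> U"
  then obtain A where hA: "(\<psi> has_derivative (\<lambda>w. Re w *\<^sub>R A + Im w *\<^sub>R (I \<star> A))) (at z)"
    using sh unfolding SH_def by blast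
  have d: "((\<lambda>z. Lam I c (\<psi> z)) has_derivative (\<lambda>w. Lam I c (Re w *\<^sub>R A + Im w *\<^sub>R (I \<star> A)))) (at z)"
    by (rule bounded_linear.has_derivative[OF bl_Lam hA])
  have e: "(\<lambda>w. Lam I c (Re w *\<^sub>R A + Im w *\<^sub>R (I \<star> A))) = (*) (Lam I c A)"
  proof
    fix w
    have "I \<star> (I \<star> A) = - A" using II[OF I] .
    then show "Lam I c (Re w *\<^sub>R A + Im w *\<^sub>R (I \<star> A)) = Lam I c A * w"
      by (simp add: Lam_def qmul_add_right qmul_scaleR_right complex_eq_iff algebra_simps)
  qed
  show "\<exists>f'. ((\<lambda>z. Lam I c (\<psi> z)) has_field_derivative f') (at z)"
    using d e unfolding has_field_derivative_def by metis
qed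

lemma reg_SH:
  assumes I: "I \<in> qS" and reg: "regular \<Omega> f"
  shows "SH I (iota I -` \<Omega>) (\<lambda>z. f (iota I z))"
  unfolding SH_def
proof
  fix z assume "z \<in> iota I -` \<Omega>"
  define x where "x = Re z"
  define y where "y = Im z"
  have mem: "qreal x + y *\<^sub>R I \<in> \<Omega>" using \<open>z \<in> _\<close> by (simp add: iota_def x_def y_def)
  have dif: "((\<lambda>(a::real, b::real). f (qreal a + b *\<^sub>R I)) differentiable (at (x, y)))"
    and cr: "(1/2) *\<^sub>R (vector_derivative (\<lambda>a. f (qreal a + y *\<^sub>R I)) (at x)
            + I \<star> vector_derivative (\<lambda>b. f (qreal x + b *\<^sub>R I)) (at y)) = 0"
    using reg I mem unfolding regular_def by blast+
  obtain D where hD: "((\<lambda>(a::real, b::real). f (qreal a + b *\<^sub>R I)) has_derivative D) (at (x, y))"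
    using dif unfolding differentiable_def by blast
  have blD: "linear D" using has_derivative_bounded_linear[OF hD] bounded_linear.linear by blast
  have p: "((\<lambda>w. (Re w, Im w)) has_derivative (\<lambda>w. (Re w, Im w))) (at z)"
    by (intro bounded_linear_imp_has_derivative bounded_linear_Pair bounded_linear_Re bounded_linear_Im)
  have c1: "((\<lambda>w. f (iota I w)) has_derivative (\<lambda>w. D (Re w, Im w))) (at z)"
    using has_derivative_compose[OF p, of "\<lambda>(a, b). f (qreal a + b *\<^sub>R I)" D] hD
    by (simp add: iota_def x_def y_def)
  have px: "((\<lambda>a. (a, y)) has_derivative (\<lambda>a. (a, 0))) (at x)"
    by (intro derivative_eq_intros) auto
  have py: "((\<lambda>b. (x, b)) has_derivative (\<lambda>b. (0, b))) (at y)"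
    by (intro derivative_eq_intros) auto
  have dx: "((\<lambda>a. f (qreal a + y *\<^sub>R I)) has_derivative (\<lambda>a. D (a, 0))) (at x)"
    using has_derivative_compose[OF px, of "\<lambda>(a, b). f (qreal a + b *\<^sub>R I)" D] hD by simp
  have dy: "((\<lambda>b. f (qreal x + b *\<^sub>R I)) has_derivative (\<lambda>b. D (0, b))) (at y)"
    using has_derivative_compose[OF py, of "\<lambda>(a, b). f (qreal a + b *\<^sub>R I)" D] hD by simp
  have sx: "D (a, 0) = a *\<^sub>R D (1, 0)" for a
    using linear.scaleR[OF blD, of a "(1,0)"] by simp
  have sy: "D (0, b) = b *\<^sub>R D (0, 1)" for b
    using linear.scaleR[OF blD, of b "(0,1)"] by simp
  have vx: "vector_derivative (\<lambda>a. f (qreal a + y *\<^sub>R I)) (at x) = D (1, 0)"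
    by (rule vector_derivative_at) (use dx in \<open>simp add: has_vector_derivative_def sx[symmetric]\<close>)
  have vy: "vector_derivative (\<lambda>b. f (qreal x + b *\<^sub>R I)) (at y) = D (0, 1)"
    by (rule vector_derivative_at) (use dy in \<open>simp add: has_vector_derivative_def sy[symmetric]\<close>)
  have cr2: "D (1, 0) = - (I \<star> D (0, 1))" using cr vx vy by (simp add: eq_neg_iff_add_eq_0)
  have iA: "I \<star> D (1, 0) = D (0, 1)" using cr2 II[OF I] by (simp add: qmul_uminus_right)
  have lin: "D (Re w, Im w) = Re w *\<^sub>R D (1, 0) + Im w *\<^sub>R (I \<star> D (1, 0))" for w
  proof -
    have "(Re w, Im w) = (Re w, 0) + (0, Im w)" by simp
    then have "D (Re w, Im w) = D (Re w, 0) + D (0, Im w)" using linear_add[OF blD] by metis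
    then show ?thesis using sx[of "Re w"] sy[of "Im w"] iA by simp
  qed
  show "\<exists>A. ((\<lambda>z. f (iota I z)) has_derivative (\<lambda>w. Re w *\<^sub>R A + Im w *\<^sub>R (I \<star> A))) (at z)"
    using c1 lin by (intro exI[of _ "D (1, 0)"]) simp
qed

lemma SH_rmul: assumes "SH I U \<psi>" shows "SH I U (\<lambda>z. \<psi> z \<star> p)"
  unfolding SH_def
proof
  fix z assume "z \<in> U"
  then obtain A where hA: "(\<psi> has_derivative (\<lambda>w. Re w *\<^sub>R A + Im w *\<^sub>R (I \<star> A))) (at z)"
    using assms unfolding SH_def by blast
  have "((\<lambda>z. \<psi> z \<star> p) has_derivative (\<lambda>w. (Re w *\<^sub>R A + Im w *\<^sub>R (I \<star> A)) \<star> p)) (at z)"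
    by (rule bounded_linear.has_derivative[OF bl_qmul_left hA])
  moreover have "(\<lambda>w. (Re w *\<^sub>R A + Im w *\<^sub>R (I \<star> A)) \<star> p) = (\<lambda>w. Re w *\<^sub>R (A \<star> p) + Im w *\<^sub>R (I \<star> (A \<star> p)))"
    by (simp add: qmul_add_left qmul_scaleR_left qmul_assoc)
  ultimately show "\<exists>A. ((\<lambda>z. \<psi> z \<star> p) has_derivative (\<lambda>w. Re w *\<^sub>R A + Im w *\<^sub>R (I \<star> A))) (at z)"
    by metis
qed

lemma SH_add: assumes "SH I U \<psi>" "SH I U \<phi>" shows "SH I U (\<lambda>z. \<psi> z + \<phi> z)"
  unfolding SH_def
proof
  fix z assume "z \<in> U"
  then obtain A B where hA: "(\<psi> has_derivative (\<lambda>w. Re w *\<^sub>R A + Im w *\<^sub>R (I \<star> A))) (at z)"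
    and hB: "(\<phi> has_derivative (\<lambda>w. Re w *\<^sub>R B + Im w *\<^sub>R (I \<star> B))) (at z)"
    using assms unfolding SH_def by blast
  have "((\<lambda>z. \<psi> z + \<phi> z) has_derivative (\<lambda>w. (Re w *\<^sub>R A + Im w *\<^sub>R (I \<star> A)) + (Re w *\<^sub>R B + Im w *\<^sub>R (I \<star> B)))) (at z)"
    by (rule has_derivative_add[OF hA hB])
  moreover have "(\<lambda>w. (Re w *\<^sub>R A + Im w *\<^sub>R (I \<star> A)) + (Re w *\<^sub>R B + Im w *\<^sub>R (I \<star> B))) = (\<lambda>w. Re w *\<^sub>R (A + B) + Im w *\<^sub>R (I \<star> (A + B)))"
    by (simp add: qmul_add_right algebra_simps)
  ultimately show "\<exists>A. ((\<lambda>z. \<psi> z + \<phi> z) has_derivative (\<lambda>w. Re w *\<^sub>R A + Im w *\<^sub>R (I \<star> A))) (at z)"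
    by metis
qed

lemma SH_zero: "SH I U (\<lambda>z. 0)"
  unfolding SH_def
  by (intro ballI exI[of _ 0]) (simp add: has_derivative_const[of 0, simplified])

lemma SH_sum: assumes "finite S" "\<And>j. j \<in> S \<Longrightarrow> SH I U (\<psi> j)" shows "SH I U (\<lambda>z. \<Sum>j\<in>S. \<psi> j z)"
  using assms
proof (induction S rule: finite_induct)
  case empty then show ?case by (simp add: SH_zero)
next
  case (insert x F) then show ?case by (simp add: SH_add)
qed

lemma iota_add: "iota I (z + complex_of_real t) = iota I z + qreal t"
  by (simp add: iota_def qreal_add)

lemma hvd_rmul: "(f has_vector_derivative v) F \<Longrightarrow> ((\<lambda>t. f t \<star> p) has_vector_derivative (v \<star> p)) F"
  unfolding has_vector_derivative_def
  using bounded_linear.has_derivative[OF bl_qmul_left, of f "\<lambda>x. x *\<^sub>R v" F p]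
  by (simp add: qmul_scaleR_left)

lemma hvd_step:
  assumes U: "open U" and holo: "\<And>c. h c holomorphic_on U"
    and P: "\<forall>z\<in>U. (sderiv^^m) f (iota I z) = (\<chi> c. Re ((deriv^^m) (h c) z))"
    and z: "z \<in> U"
  shows "((\<lambda>t. (sderiv^^m) f (iota I z + qreal t)) has_vector_derivative (\<chi> c. Re ((deriv^^Suc m) (h c) z))) (at 0)"
proof -
  obtain r where r: "r > 0" "ball z r \<subseteq> U" using U z open_contains_ball by blast
  have hc: "((\<lambda>t. Re ((deriv^^m) (h c) (z + complex_of_real t))) has_vector_derivative Re ((deriv^^Suc m) (h c) z)) (at 0)" for c
  proof -
    have ho: "(deriv^^m) (h c) holomorphic_on U" by (rule holomorphic_higher_deriv[OF holo U])
    have d1: "((\<lambda>t. z + complex_of_real t) has_vector_derivative 1) (at (0::real))"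
      by (auto intro!: derivative_eq_intros simp: has_vector_derivative_def fun_eq_iff scaleR_conv_of_real)
    have d2: "((deriv^^m) (h c) has_field_derivative deriv ((deriv^^m) (h c)) z) (at ((\<lambda>t. z + complex_of_real t) 0))"
      using holomorphic_derivI[OF ho U z] by simp
    have "(((deriv^^m) (h c) \<circ> (\<lambda>t. z + complex_of_real t)) has_vector_derivative (1 * deriv ((deriv^^m) (h c)) z)) (at 0)"
      by (rule field_vector_diff_chain_at[OF d1 d2])
    then have "((\<lambda>t. (deriv^^m) (h c) (z + complex_of_real t)) has_vector_derivative ((deriv^^Suc m) (h c) z)) (at 0)"
      by (simp add: o_def)
    then show ?thesis
      unfolding has_vector_derivative_def
      using bounded_linear.has_derivative[OF bounded_linear_Re]
      by fastforce
  qed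
  have g: "((\<lambda>t. (\<chi> c. Re ((deriv^^m) (h c) (z + complex_of_real t)))) has_vector_derivative (\<chi> c. Re ((deriv^^Suc m) (h c) z))) (at 0)"
    by (rule hvd_vec) (simp only: vec_lambda_beta, rule hc)
  show ?thesis
  proof (rule has_vector_derivative_transform_within[OF g r(1)])
    fix t :: real assume "t \<in> UNIV" "dist t 0 < r"
    then have "z + complex_of_real t \<in> U" using r by (auto simp: dist_norm)
    then show "(\<chi> c. Re ((deriv^^m) (h c) (z + complex_of_real t))) = (sderiv^^m) f (iota I z + qreal t)"
      using P[rule_format, of "z + complex_of_real t"] by (simp add: iota_add)
  qed simp
qed

lemma iter_deriv:
  assumes U: "open U" and holo: "\<And>c. h c holomorphic_on U"
    and base: "\<forall>z\<in>U. f (iota I z) = (\<chi> c. Re (h c z))"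
  shows "\<forall>z\<in>U. (sderiv^^m) f (iota I z) = (\<chi> c. Re ((deriv^^m) (h c) z))"
proof (induction m)
  case 0 then show ?case using base by simp
next
  case (Suc m)
  show ?case
  proof
    fix z assume z: "z \<in> U"
    have "(sderiv^^Suc m) f (iota I z) = vector_derivative (\<lambda>t. (sderiv^^m) f (iota I z + qreal t)) (at 0)"
      by (simp add: sderiv_def)
    also have "\<dots> = (\<chi> c. Re ((deriv^^Suc m) (h c) z))"
      by (rule vector_derivative_at[OF hvd_step[OF U holo Suc z]])
    finally show "(sderiv^^Suc m) f (iota I z) = (\<chi> c. Re ((deriv^^Suc m) (h c) z))" .
  qed
qed

lemma qreal_scale: "qreal r = r *\<^sub>R qreal 1"
  by (rule quat_eqI) (simp_all add: qreal_def)

lemma cont_iota: "continuous_on UNIV (iota I)"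
proof -
  have "iota I = (\<lambda>z. Re z *\<^sub>R qreal 1 + Im z *\<^sub>R I)"
    by (rule ext, simp add: iota_def qreal_scale[of "Re _"])
  then show ?thesis by (auto intro!: continuous_intros)
qed

lemma linear_qmatvec: "linear (qmatvec A)"
  by (rule linearI) (simp_all add: qmatvec_def vec_eq_iff qmul_add_right qmul_scaleR_right sum.distrib scaleR_sum_right)

lemma bl_qmatvec: "bounded_linear (qmatvec A)"
  using linear_conv_bounded_linear linear_qmatvec by blast

theorem theorem3p6:
  fixes \<Omega> :: "quat set" and F :: "quat \<Rightarrow> quat ^'n ^'n"
    and I q0 :: quat and x0 :: "quat ^'n"
  assumes "slice_domain \<Omega>"
    and "matrix_regular \<Omega> F"
    and "I \<in> qS" and "q0 \<in> \<Omega> \<inter> slice I"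
    and "\<forall>q\<in>\<Omega>. qopnorm (F q) \<le> qopnorm (F q0)"
    and "maximizing_vector (F q0) x0"
  shows "\<forall>k\<ge>1. qmatvec (msderiv k F q0) x0 = 0"
proof -
  note I = \<open>I \<in> qS\<close>
  define U where "U = iota I -` \<Omega>"
  have U: "open U" unfolding U_def
    using assms(1) cont_iota open_vimage unfolding slice_domain_def by blast
  obtain x y where q0: "q0 = qreal x + y *\<^sub>R I" using assms(4) unfolding slice_def by blast
  define z0 where "z0 = Complex x y"
  have iz0: "iota I z0 = q0" by (simp add: iota_def z0_def q0)
  have z0U: "z0 \<in> U" using iz0 assms(4) by (simp add: U_def)
  define w where "w = qmatvec (F q0) x0"
  define g where "g z = qmatvec (F (iota I z)) x0" for z
  have gi: "g z $ i = (\<Sum>j\<in>UNIV. F (iota I z) $ i $ j \<star> x0 $ j)" for z i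
    by (simp add: g_def qmatvec_def)
  have shF: "SH I U (\<lambda>z. F (iota I z) $ i $ j)" for i j
    unfolding U_def using reg_SH[OF I] assms(2) unfolding matrix_regular_def by blast
  have shg: "SH I U (\<lambda>z. g z $ i)" for i
    unfolding gi by (intro SH_sum SH_rmul shF) simp
  define H where "H z = (\<Sum>i\<in>UNIV. \<Sum>c\<in>UNIV. complex_of_real (w $ i $ c) * Lam I c (g z $ i))" for z
  have holH: "H holomorphic_on U"
    unfolding H_def
    by (intro holomorphic_intros SH_holo[OF I U shg])
  have ReH: "Re (H z) = inner (g z) w" for z
    by (simp add: H_def inner_vec_def Re_sum mult.commute)
  have gz0: "g z0 = w" by (simp add: g_def w_def iz0)
  have nx0: "norm x0 = 1" and nw: "norm w = qopnorm (F q0)"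
    using assms(6) unfolding maximizing_vector_def w_def by auto
  have gbound: "norm (g z) \<le> norm w" if "z \<in> U" for z
  proof -
    have "norm (g z) \<le> qopnorm (F (iota I z)) * norm x0"
      unfolding g_def qopnorm_def by (rule onorm[OF bl_qmatvec])
    also have "\<dots> \<le> norm w" using assms(5) that nx0 nw by (simp add: U_def)
    finally show ?thesis .
  qed
  have Hbound: "Re (H z) \<le> Re (H z0)" if "z \<in> U" for z
  proof -
    have "Re (H z) \<le> norm (g z) * norm w" unfolding ReH by (rule norm_cauchy_schwarz)
    also have "\<dots> \<le> norm w * norm w" using gbound[OF that] by (simp add: mult_right_mono)
    also have "\<dots> = Re (H z0)" unfolding ReH gz0 by (simp add: dot_square_norm power2_eq_square)
    finally show ?thesis .
  qed
  obtain r where r: "r > 0" "ball z0 r \<subseteq> U" using U z0U open_contains_ball by blast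
  have "(exp \<circ> H) constant_on ball z0 r"
  proof (rule maximum_modulus_principle[where U = "ball z0 r" and \<xi> = z0])
    show "(exp \<circ> H) holomorphic_on ball z0 r"
      using holH r(2) by (intro holomorphic_on_compose holomorphic_intros) (auto intro: holomorphic_on_subset)
  next
    fix z assume "z \<in> ball z0 r"
    then show "norm ((exp \<circ> H) z) \<le> norm ((exp \<circ> H) z0)" using Hbound r(2) by auto
  qed (use r in auto)
  then have ReHc: "Re (H z) = Re (H z0)" if "z \<in> ball z0 r" for z
    using that r(1) unfolding constant_on_def
    by (metis centre_in_ball comp_apply exp_inj_iff norm_exp_eq_Re)
  have gconst: "g z = w" if "z \<in> ball z0 r" for z
  proof -
    have e: "inner (g z) w = inner w w" using ReHc[OF that] unfolding ReH gz0 .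
    have "norm (g z) \<le> norm w" using gbound r(2) that by auto
    then have "inner (g z) (g z) \<le> inner w w" by (simp add: dot_square_norm power_mono)
    then have "inner (g z - w) (g z - w) \<le> 0" using e by (simp add: inner_diff inner_commute)
    then have "inner (g z - w) (g z - w) = 0" using inner_ge_zero[of "g z - w"] by linarith
    then show ?thesis by simp
  qed
  define S where "S m z i = (\<Sum>j\<in>UNIV. (sderiv^^m) (\<lambda>p. F p $ i $ j) (iota I z) \<star> x0 $ j)" for m z i
  have hvdF: "((\<lambda>t. (sderiv^^m) (\<lambda>p. F p $ i $ j) (iota I z + qreal t)) has_vector_derivative
      (sderiv^^Suc m) (\<lambda>p. F p $ i $ j) (iota I z)) (at 0)" if "z \<in> U" for m i j z
  proof -
    define h where "h c z = Lam I c (F (iota I z) $ i $ j)" for c z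
    have holo: "h c holomorphic_on U" for c unfolding h_def by (rule SH_holo[OF I U shF])
    have base: "\<forall>z\<in>U. (\<lambda>p. F p $ i $ j) (iota I z) = (\<chi> c. Re (h c z))"
      by (simp add: h_def vec_eq_iff)
    have it: "\<forall>z\<in>U. (sderiv^^m') (\<lambda>p. F p $ i $ j) (iota I z) = (\<chi> c. Re ((deriv^^m') (h c) z))" for m'
      by (rule iter_deriv[OF U holo base])
    show ?thesis using hvd_step[OF U holo it[of m] that] it[of "Suc m"] that by simp
  qed
  have Sc: "\<forall>z\<in>ball z0 r. S m z i = (if m = 0 then w $ i else 0)" for m i
  proof (induction m)
    case 0 show ?case
    proof
      fix z assume zb: "z \<in> ball z0 r"
      show "S 0 z i = (if 0 = (0::nat) then w $ i else 0)"
        using gconst[OF zb] gi[of z i] by (simp add: S_def)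
    qed
  next
    case (Suc m)
    show ?case
    proof
      fix z assume z: "z \<in> ball z0 r"
      then have zU: "z \<in> U" using r by auto
      have d1: "((\<lambda>t. S m (z + complex_of_real t) i) has_vector_derivative S (Suc m) z i) (at 0)"
        unfolding S_def iota_add
        by (intro has_vector_derivative_sum hvd_rmul hvdF[OF zU])
      obtain e where e: "e > 0" "ball z e \<subseteq> ball z0 r" using z open_contains_ball open_ball by blast
      have d2: "((\<lambda>t. S m (z + complex_of_real t) i) has_vector_derivative 0) (at 0)"
      proof (rule has_vector_derivative_transform_within[OF has_vector_derivative_const e(1)])
        fix t :: real assume "t \<in> UNIV" "dist t 0 < e"
        then have "z + complex_of_real t \<in> ball z e" by (simp add: dist_norm)
        then have "z + complex_of_real t \<in> ball z0 r" using e(2) by blast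
        then show "(if m = 0 then w $ i else 0) = S m (z + complex_of_real t) i" using Suc by simp
      qed simp
      show "S (Suc m) z i = (if Suc m = 0 then w $ i else 0)"
        using vector_derivative_unique_at[OF d1 d2] by simp
    qed
  qed
  show ?thesis
  proof (intro allI impI)
    fix k :: nat assume "k \<ge> 1"
    show "qmatvec (msderiv k F q0) x0 = 0"
    proof (subst vec_eq_iff, intro allI)
      fix i
      have "qmatvec (msderiv k F q0) x0 $ i = S k z0 i"
        by (simp add: qmatvec_def msderiv_def S_def iz0)
      also have "\<dots> = 0" using Sc[of k i] r(1) \<open>k \<ge> 1\<close> by simp
      finally show "qmatvec (msderiv k F q0) x0 $ i = 0 $ i" by simp
    qed
  qed
qed

end
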